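(* For every integer $n\ge1$ and every integer $j$ with $1\le j\le n$, setting $\mathcal{B}_{m,i}=\sum_{k=i}^{m}(-1)^{k-i}{m\brace k}{k\brack i}H_k$, one has \[ \mathcal{B}_{n+1,j}=\mathcal{B}_{n,j-1}+\binom{n}{j}\frac{B_{n+1-j}}{n+1-j}. \]
   Context: $B_m$ denotes the $m$th Bernoulli number, defined by $\frac{t}{e^t-1}=\sum_{m\ge0}B_m\frac{t^m}{m!}$. ${k\brack j}$ denotes the unsigned Stirling number of the first kind ($x(x+1)\cdots(x+k-1)=\sum_j{k\brack j}x^j$), ${n\brace k}$ the Stirling number of the second kind ($x^n=\sum_k(-1)^{n-k}{n\brace k}x(x+1)\cdots(x+k-1)$), and $H_k=\sum_{i=1}^k 1/i$ the $k$th harmonic number, $H_0=0$. *)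

theory Defs
  imports "HOL-Analysis.Analysis" "HOL-Combinatorics.Stirling"
begin

text \<open>Bernoulli numbers with B_1 = -1/2, i.e. t/(e^t-1) = sum B_m t^m/m!.
  Defined by the recursion equivalent to this generating function:
  B_0 = 1 and B_m = -(1/(m+1)) * sum_{k<m} C(m+1,k) B_k.\<close>
fun bernoulli :: "nat \<Rightarrow> real" where
  "bernoulli m = (if m = 0 then 1 else
     - (\<Sum>k<m. real ((m + 1) choose k) * (if k < m then bernoulli k else 0)) / real (m + 1))"

definition calB :: "nat \<Rightarrow> nat \<Rightarrow> real" where
  "calB m i = (\<Sum>k=i..m. (-1) ^ (k - i) * real (Stirling m k) * real (stirling k i) * harm k)"

end

theory Submission
  imports Defs "HOL-Computational_Algebra.Polynomial"
begin

declare bernoulli.simps[simp del]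

definition ff :: "nat \<Rightarrow> real \<Rightarrow> real" where
  "ff k x = (-1)^k * pochhammer (-x) k"

lemma ff_0[simp]: "ff 0 x = 1" by (simp add: ff_def)

lemma ff_Suc: "ff (Suc k) x = ff k x * (x - real k)"
  by (simp add: ff_def pochhammer_Suc algebra_simps)

lemma ff_Suc': "ff (Suc k) x = x * ff k (x - 1)"
  by (simp add: ff_def pochhammer_rec algebra_simps)

lemma ff_stirling_k:
  "(\<Sum>i\<le>k. (-1)^(k-i) * real (stirling k i) * x^i) = ff k x"
proof -
  have "ff k x = (-1)^k * (\<Sum>i\<le>k. real (stirling k i) * (-x)^i)"
    by (simp add: ff_def stirling_pochhammer)
  also have "\<dots> = (\<Sum>i\<le>k. (-1)^(k-i) * real (stirling k i) * x^i)"
    unfolding sum_distrib_left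
  proof (rule sum.cong)
    fix i assume "i \<in> {..k}"
    then have "(-1::real)^k = (-1)^(k-i) * (-1)^i"
      by (simp flip: power_add)
    then show "(-1)^k * (real (stirling k i) * (-x)^i) = (-1)^(k-i) * real (stirling k i) * x^i"
      by (simp add: power_minus[of x] algebra_simps)
  qed simp
  finally show ?thesis ..
qed

lemma ff_stirling:
  assumes "k \<le> m"
  shows "(\<Sum>i\<le>m. (-1)^(k-i) * real (stirling k i) * x^i) = ff k x"
proof -
  have "(\<Sum>i\<le>m. (-1)^(k-i) * real (stirling k i) * x^i) = (\<Sum>i\<le>k. (-1)^(k-i) * real (stirling k i) * x^i)"
    by (rule sum.mono_neutral_right) (use assms in auto)
  then show ?thesis using ff_stirling_k by simp
qed

lemma calB_alt:
  "calB m i = (\<Sum>k\<le>m. (-1) ^ (k - i) * real (Stirling m k) * real (stirling k i) * harm k)"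
  unfolding calB_def
  by (rule sum.mono_neutral_left) auto

lemma P_eq:
  "(\<Sum>i\<le>m. calB m i * x^i) = (\<Sum>k\<le>m. real (Stirling m k) * harm k * ff k x)"
proof -
  have "(\<Sum>i\<le>m. calB m i * x^i) =
     (\<Sum>i\<le>m. \<Sum>k\<le>m. (-1) ^ (k - i) * real (Stirling m k) * real (stirling k i) * harm k * x^i)"
    by (simp add: calB_alt sum_distrib_right)
  also have "\<dots> = (\<Sum>k\<le>m. \<Sum>i\<le>m. (-1) ^ (k - i) * real (Stirling m k) * real (stirling k i) * harm k * x^i)"
    by (rule sum.swap)
  also have "\<dots> = (\<Sum>k\<le>m. real (Stirling m k) * harm k * (\<Sum>i\<le>m. (-1)^(k-i) * real (stirling k i) * x^i))"
    by (simp add: sum_distrib_left mult_ac)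
  also have "\<dots> = (\<Sum>k\<le>m. real (Stirling m k) * harm k * ff k x)"
    by (rule sum.cong) (simp_all add: ff_stirling)
  finally show ?thesis .
qed

lemma shift0:
  fixes f :: "nat \<Rightarrow> real"
  assumes "f 0 = 0" "f (Suc n) = 0"
  shows "(\<Sum>k\<le>n. f (Suc k)) = (\<Sum>k\<le>n. f k)"
  using sum.atMost_Suc_shift[of f n] sum.atMost_Suc[of f n] assms by simp

lemma x_ff: "x * ff k x = ff (Suc k) x + real k * ff k x"
  by (simp add: ff_Suc algebra_simps)

lemma Stirling_ff: "(\<Sum>k\<le>n. real (Stirling n k) * ff k t) = t^n"
proof (induction n)
  case 0 then show ?case by simp
next
  case (Suc n)
  have "(\<Sum>k\<le>Suc n. real (Stirling (Suc n) k) * ff k t)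
      = (\<Sum>k\<le>n. real (Stirling (Suc n) (Suc k)) * ff (Suc k) t)"
    by (subst sum.atMost_Suc_shift) simp
  also have "\<dots> = (\<Sum>k\<le>n. real (Suc k) * real (Stirling n (Suc k)) * ff (Suc k) t)
       + (\<Sum>k\<le>n. real (Stirling n k) * ff (Suc k) t)"
    by (simp add: sum.distrib algebra_simps)
  also have "(\<Sum>k\<le>n. real (Suc k) * real (Stirling n (Suc k)) * ff (Suc k) t)
       = (\<Sum>k\<le>n. real k * real (Stirling n k) * ff k t)"
    by (rule shift0[where f="\<lambda>k. real k * real (Stirling n k) * ff k t"]) auto
  also have "(\<Sum>k\<le>n. real k * real (Stirling n k) * ff k t) + (\<Sum>k\<le>n. real (Stirling n k) * ff (Suc k) t)
       = t * (\<Sum>k\<le>n. real (Stirling n k) * ff k t)"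
  proof -
    have "t * (\<Sum>k\<le>n. real (Stirling n k) * ff k t) = (\<Sum>k\<le>n. real (Stirling n k) * (t * ff k t))"
      by (simp add: sum_distrib_left mult_ac)
    also have "\<dots> = (\<Sum>k\<le>n. real (Stirling n k) * ff (Suc k) t + real k * real (Stirling n k) * ff k t)"
      by (simp add: x_ff algebra_simps)
    finally show ?thesis by (simp add: sum.distrib)
  qed
  finally show ?case using Suc by simp
qed

lemma ff_sum: "(\<Sum>t<x. ff k (real t)) = ff (Suc k) (real x) / (real k + 1)"
proof (induction x)
  case 0 then show ?case by (simp add: ff_Suc')
next
  case (Suc x)
  have "ff (Suc k) (real (Suc x)) = real (Suc x) * ff k (real x)"
    by (simp add: ff_Suc')
  then show ?case using Suc by (simp add: ff_Suc field_simps)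
qed

lemma diffP:
  "(\<Sum>k\<le>Suc n. real (Stirling (Suc n) k) * harm k * ff k x)
   - x * (\<Sum>k\<le>n. real (Stirling n k) * harm k * ff k x)
   = (\<Sum>k\<le>n. real (Stirling n k) / (real k + 1) * ff (Suc k) x)"
proof -
  have "(\<Sum>k\<le>Suc n. real (Stirling (Suc n) k) * harm k * ff k x)
      = (\<Sum>k\<le>n. real (Stirling (Suc n) (Suc k)) * harm (Suc k) * ff (Suc k) x)"
    by (subst sum.atMost_Suc_shift) simp
  also have "\<dots> = (\<Sum>k\<le>n. real (Suc k) * real (Stirling n (Suc k)) * harm (Suc k) * ff (Suc k) x)
       + (\<Sum>k\<le>n. real (Stirling n k) * harm (Suc k) * ff (Suc k) x)"
    by (simp add: sum.distrib algebra_simps)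
  also have "(\<Sum>k\<le>n. real (Suc k) * real (Stirling n (Suc k)) * harm (Suc k) * ff (Suc k) x)
       = (\<Sum>k\<le>n. real k * real (Stirling n k) * harm k * ff k x)"
    by (rule shift0[where f="\<lambda>k. real k * real (Stirling n k) * harm k * ff k x"]) auto
  finally have A: "(\<Sum>k\<le>Suc n. real (Stirling (Suc n) k) * harm k * ff k x) =
      (\<Sum>k\<le>n. real k * real (Stirling n k) * harm k * ff k x) +
      (\<Sum>k\<le>n. real (Stirling n k) * harm (Suc k) * ff (Suc k) x)" .
  have B: "x * (\<Sum>k\<le>n. real (Stirling n k) * harm k * ff k x)
      = (\<Sum>k\<le>n. real (Stirling n k) * harm k * ff (Suc k) x + real k * real (Stirling n k) * harm k * ff k x)"
    unfolding sum_distrib_left by (rule sum.cong) (simp_all add: ff_Suc algebra_simps)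
  show ?thesis unfolding A B sum.distrib[symmetric] sum_subtractf[symmetric]
    by (rule sum.cong) (simp_all add: harm_Suc field_simps)
qed

lemma bern_rec:
  assumes "m > 0"
  shows "(\<Sum>k<m. real ((m + 1) choose k) * bernoulli k) + real (m + 1) * bernoulli m = 0"
proof -
  have "bernoulli m = - (\<Sum>k<m. real ((m + 1) choose k) * (if k < m then bernoulli k else 0)) / real (m + 1)"
    using assms by (subst bernoulli.simps) simp
  also have "(\<Sum>k<m. real ((m + 1) choose k) * (if k < m then bernoulli k else 0))
     = (\<Sum>k<m. real ((m + 1) choose k) * bernoulli k)" by (rule sum.cong) auto
  finally show ?thesis by (simp add: field_simps)
qed

lemma Bsum: "(\<Sum>k\<le>p. real (p choose k) * bernoulli k) = bernoulli p + (if p = 1 then 1 else 0)"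
proof (cases "p \<le> 1")
  case True
  then consider "p = 0" | "p = 1" by linarith
  then show ?thesis
    by cases (simp_all add: bernoulli.simps[of 0])
next
  case False
  then obtain m where p: "p = Suc (Suc m)" 
  proof -
    have "p = Suc (Suc (p - 2))" using False by simp
    then show ?thesis by (rule that)
  qed
  have "(\<Sum>k\<le>p. real (p choose k) * bernoulli k) =
     (\<Sum>k<Suc m. real ((Suc m + 1) choose k) * bernoulli k) + real (Suc m + 1) * bernoulli (Suc m) + bernoulli p"
    unfolding p by (simp add: lessThan_Suc_atMost[symmetric])
  also have "\<dots> = bernoulli p" using bern_rec[of "Suc m"] by simp
  finally show ?thesis using p by simp
qed

definition Bp :: "nat \<Rightarrow> real \<Rightarrow> real" where
  "Bp m x = (\<Sum>i\<le>m. real (m choose i) * bernoulli (m - i) * x^i)"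

lemma coeff_lemma:
  assumes "l \<le> m"
  shows "(\<Sum>i\<le>m. real (m choose i) * real (i choose l) * bernoulli (m - i))
        = real (m choose l) * (bernoulli (m - l) + (if m - l = 1 then 1 else 0))"
proof -
  let ?p = "m - l"
  have "(\<Sum>i\<le>m. real (m choose i) * real (i choose l) * bernoulli (m - i))
      = (\<Sum>i\<in>{l..m}. real (m choose i) * real (i choose l) * bernoulli (m - i))"
    by (rule sum.mono_neutral_right) auto
  also have "\<dots> = (\<Sum>j\<in>{0..?p}. real (m choose (j + l)) * real ((j + l) choose l) * bernoulli (m - (j + l)))"
    using sum.shift_bounds_cl_nat_ivl[of "\<lambda>i. real (m choose i) * real (i choose l) * bernoulli (m - i)" 0 l ?p] assms
    by simp
  also have "\<dots> = (\<Sum>j\<in>{0..?p}. real (m choose l) * (real (?p choose j) * bernoulli (?p - j)))"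
  proof (rule sum.cong)
    fix j assume j: "j \<in> {0..?p}"
    have "(m choose (j + l)) * ((j + l) choose l) = (m choose l) * ((m - l) choose (j + l - l))"
      by (rule choose_mult) (use j assms in auto)
    then have "real (m choose (j + l)) * real ((j + l) choose l) = real (m choose l) * real (?p choose j)"
      by (metis add_diff_cancel_right' of_nat_mult)
    moreover have "m - (j + l) = ?p - j" by simp
    ultimately show "real (m choose (j + l)) * real ((j + l) choose l) * bernoulli (m - (j + l)) =
         real (m choose l) * (real (?p choose j) * bernoulli (?p - j))" by simp
  qed simp
  finally have outer: "(\<Sum>i\<le>m. real (m choose i) * real (i choose l) * bernoulli (m - i)) = (\<Sum>j\<in>{0..?p}. real (m choose l) * (real (?p choose j) * bernoulli (?p - j)))" .
  have "(\<Sum>j\<in>{0..?p}. real (?p choose j) * bernoulli (?p - j))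
      = (\<Sum>j\<in>{0..?p}. real (?p choose (?p - j)) * bernoulli (?p - j))"
    by (intro sum.cong refl) (metis atLeastAtMost_iff binomial_symmetric)
  also have "\<dots> = (\<Sum>j\<in>{0..?p}. real (?p choose j) * bernoulli j)"
    using sum.atLeastAtMost_rev[of "\<lambda>j. real (?p choose j) * bernoulli j" 0 ?p] by simp
  finally have inner: "(\<Sum>j\<in>{0..?p}. real (?p choose j) * bernoulli (?p - j)) = bernoulli ?p + (if ?p = 1 then 1 else 0)"
    using Bsum[of ?p] by (simp only: atLeast0AtMost)
  show ?thesis by (simp only: outer sum_distrib_left[symmetric] inner)
qed

lemma Bp_diff:
  assumes "m \<ge> 1"
  shows "Bp m (x + 1) - Bp m x = real m * x^(m - 1)"
proof -
  have "Bp m (x + 1) = (\<Sum>i\<le>m. real (m choose i) * bernoulli (m - i) * (\<Sum>l\<le>m. real (i choose l) * x^l))"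
    unfolding Bp_def
  proof (rule sum.cong)
    fix i assume "i \<in> {..m}"
    have "(x + 1)^i = (\<Sum>l\<le>i. real (i choose l) * x^l)"
      by (simp add: binomial_ring)
    also have "\<dots> = (\<Sum>l\<le>m. real (i choose l) * x^l)"
      by (rule sum.mono_neutral_left) (use \<open>i \<in> {..m}\<close> in auto)
    finally show "real (m choose i) * bernoulli (m - i) * (x + 1) ^ i =
         real (m choose i) * bernoulli (m - i) * (\<Sum>l\<le>m. real (i choose l) * x ^ l)" by simp
  qed simp
  also have "\<dots> = (\<Sum>i\<le>m. \<Sum>l\<le>m. real (m choose i) * real (i choose l) * bernoulli (m - i) * x^l)"
    by (simp add: sum_distrib_left mult_ac)
  also have "\<dots> = (\<Sum>l\<le>m. \<Sum>i\<le>m. real (m choose i) * real (i choose l) * bernoulli (m - i) * x^l)"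
    by (rule sum.swap)
  also have "\<dots> = (\<Sum>l\<le>m. real (m choose l) * (bernoulli (m - l) + (if m - l = 1 then 1 else 0)) * x^l)"
    by (rule sum.cong) (simp_all add: coeff_lemma flip: sum_distrib_right)
  also have "\<dots> = Bp m x + (\<Sum>l\<le>m. if l = m - 1 then real (m choose l) * x^l else 0)"
    unfolding Bp_def sum.distrib[symmetric]
    by (rule sum.cong) (use assms in \<open>auto simp: algebra_simps\<close>)
  also have "(\<Sum>l\<le>m. if l = m - 1 then real (m choose l) * x^l else 0) = real (m choose (m - 1)) * x^(m-1)"
    by (subst sum.delta) auto
  also have "real (m choose (m - 1)) = real m"
    using assms binomial_symmetric[of 1 m] by simp
  finally show ?thesis by simp
qed

definition E :: "nat \<Rightarrow> nat \<Rightarrow> real" where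
  "E n i = (if i = 0 then 0 else real (Suc n choose i) * bernoulli (Suc n - i) / real (Suc n))"

lemma E_Bp: "(\<Sum>i\<le>Suc n. E n i * y^i) = (Bp (Suc n) y - bernoulli (Suc n)) / real (Suc n)"
proof -
  have "(\<Sum>i\<le>Suc n. E n i * y^i) * real (Suc n) = (\<Sum>i\<le>Suc n. (if i = 0 then 0 else real (Suc n choose i) * bernoulli (Suc n - i) * y^i))"
    unfolding sum_distrib_right by (rule sum.cong) (auto simp: E_def)
  also have "\<dots> = Bp (Suc n) y - bernoulli (Suc n)"
    unfolding Bp_def by (subst (1 2) sum.atMost_Suc_shift) simp
  finally show ?thesis by (simp add: field_simps)
qed

lemma faulhaber: "(\<Sum>t<x. real t ^ n) = (\<Sum>i\<le>Suc n. E n i * real x ^ i)"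
proof (induction x)
  case 0
  have "(\<Sum>i\<le>Suc n. E n i * 0 ^ i) = 0"
    by (rule sum.neutral) (auto simp: E_def)
  then show ?case by simp
next
  case (Suc x)
  have "(\<Sum>i\<le>Suc n. E n i * real (Suc x) ^ i) - (\<Sum>i\<le>Suc n. E n i * real x ^ i) = real x ^ n"
  proof -
    have d: "Bp (Suc n) (real x + 1) - Bp (Suc n) (real x) = real (Suc n) * real x ^ n"
      using Bp_diff[of "Suc n" "real x"] by simp
    have "(Bp (Suc n) (real (Suc x)) - bernoulli (Suc n)) / real (Suc n) - (Bp (Suc n) (real x) - bernoulli (Suc n)) / real (Suc n)
       = (Bp (Suc n) (real x + 1) - Bp (Suc n) (real x)) / real (Suc n)"
      by (simp add: diff_divide_distrib add.commute)
    also have "\<dots> = real x ^ n" unfolding d by simp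
    finally show ?thesis unfolding E_Bp .
  qed
  then show ?case using Suc by simp
qed

lemma coeff_extract:
  fixes a :: "nat \<Rightarrow> real"
  assumes "\<And>x::nat. (\<Sum>i\<le>N. a i * real x ^ i) = 0" "j \<le> N"
  shows "a j = 0"
proof -
  define p where "p = (\<Sum>i\<le>N. monom (a i) i)"
  have ev: "poly p (real x) = 0" for x
    using assms(1)[of x] by (simp add: p_def poly_sum poly_monom)
  have "p = 0"
  proof (rule ccontr)
    assume "p \<noteq> 0"
    then have "finite {x. poly p x = 0}" by (rule poly_roots_finite)
    moreover have "range real \<subseteq> {x. poly p x = 0}" using ev by auto
    moreover have "infinite (range (real :: nat \<Rightarrow> real))"
      using range_inj_infinite[of "real :: nat \<Rightarrow> real"] inj_of_nat by blast
    ultimately show False using finite_subset by blast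
  qed
  then have "coeff p j = 0" by simp
  moreover have "coeff p j = a j"
    unfolding p_def coeff_sum using assms(2) by (simp add: coeff_monom)
  ultimately show ?thesis by simp
qed

theorem mainTheorem2:
  fixes n j :: nat
  assumes "1 \<le> n" and "1 \<le> j" and "j \<le> n"
  shows "calB (n + 1) j = calB n (j - 1)
           + real (n choose j) * bernoulli (n + 1 - j) / real (n + 1 - j)"
proof -
  define a where "a i = calB (Suc n) i - (if i = 0 then 0 else calB n (i - 1)) - E n i" for i
  have "(\<Sum>i\<le>Suc n. a i * real x ^ i) = 0" for x :: nat
  proof -
    let ?x = "real x"
    have s1: "(\<Sum>i\<le>Suc n. (if i = 0 then 0 else calB n (i - 1)) * ?x ^ i) = ?x * (\<Sum>i\<le>n. calB n i * ?x ^ i)"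
      by (subst sum.atMost_Suc_shift) (simp add: sum_distrib_left mult_ac)
    have "(\<Sum>i\<le>Suc n. calB (Suc n) i * ?x ^ i) - ?x * (\<Sum>i\<le>n. calB n i * ?x ^ i)
        = (\<Sum>k\<le>n. real (Stirling n k) / (real k + 1) * ff (Suc k) ?x)"
      unfolding P_eq by (rule diffP)
    also have "\<dots> = (\<Sum>k\<le>n. real (Stirling n k) * (\<Sum>t<x. ff k (real t)))"
      by (simp add: ff_sum)
    also have "\<dots> = (\<Sum>t<x. \<Sum>k\<le>n. real (Stirling n k) * ff k (real t))"
      by (simp add: sum_distrib_left) (rule sum.swap)
    also have "\<dots> = (\<Sum>t<x. real t ^ n)" by (simp add: Stirling_ff)
    also have "\<dots> = (\<Sum>i\<le>Suc n. E n i * ?x ^ i)" by (rule faulhaber)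
    finally show ?thesis
      unfolding a_def using s1 by (simp add: sum_subtractf left_diff_distrib)
  qed
  then have "a j = 0" by (rule coeff_extract) (use assms in simp)
  then have 1: "calB (n + 1) j = calB n (j - 1) + E n j" using assms by (simp add: a_def)
  have "real (Suc n choose j) * real (Suc n - j) = real (Suc n) * real (n choose j)"
  proof -
    have "(Suc n - j) * (Suc n choose j) = Suc n * (n choose j)"
      using binomial_absorb_comp[of "Suc n" j] by simp
    then show ?thesis by (metis mult.commute of_nat_mult)
  qed
  then have "E n j = real (n choose j) * bernoulli (n + 1 - j) / real (n + 1 - j)"
    using assms unfolding E_def by (simp add: field_simps)
  then show ?thesis using 1 by simp
qed

end
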